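(* Every finite-dimensional admissible Poisson algebra $(\mathcal{P},\cdot)$ which is not a nilalgebra contains a principal idempotent, i.e. a non-zero idempotent $e$ such that there is no non-zero idempotent $u$ with $u\cdot e=e\cdot u=0$.
   Context: $\mathbb{K}$ is a field of characteristic different from $2$ and $3$. Associator: $A(X,Y,Z)=(X\cdot Y)\cdot Z-X\cdot(Y\cdot Z)$. An admissible Poisson algebra is a $\mathbb{K}$-vector space $\mathcal{P}$ with a bilinear product $\cdot$ satisfying $3A(X,Y,Z)=(X\cdot Z)\cdot Y+(Y\cdot Z)\cdot X-(Y\cdot X)\cdot Z-(Z\cdot X)\cdot Y$ for all $X,Y,Z$. Idempotent: $e\cdot e=e$. Powers: $X^1=X$, $X^{i+1}=X\cdot X^i$; $\mathcal{P}$ is a nilalgebra if every $X$ satisfies $X^r=0$ for some $r$. *)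

theory Defs
  imports Complex_Main
begin

definition assoc :: "('v \<Rightarrow> 'v \<Rightarrow> 'v) \<Rightarrow> 'v \<Rightarrow> 'v \<Rightarrow> 'v \<Rightarrow> 'v::ab_group_add" where
  "assoc mult x y z = mult (mult x y) z - mult x (mult y z)"

definition fin_dim :: "('k::field \<Rightarrow> 'v::ab_group_add \<Rightarrow> 'v) \<Rightarrow> bool" where
  "fin_dim scale \<longleftrightarrow> (\<exists>B. finite B \<and> module.span scale B = UNIV)"

definition bilinear_prod :: "('k::field \<Rightarrow> 'v::ab_group_add \<Rightarrow> 'v) \<Rightarrow> ('v \<Rightarrow> 'v \<Rightarrow> 'v) \<Rightarrow> bool" where
  "bilinear_prod scale mult \<longleftrightarrow>
     (\<forall>x. Vector_Spaces.linear scale scale (mult x)) \<and>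
     (\<forall>y. Vector_Spaces.linear scale scale (\<lambda>x. mult x y))"

definition admissible_poisson :: "('k::field \<Rightarrow> 'v::ab_group_add \<Rightarrow> 'v) \<Rightarrow> ('v \<Rightarrow> 'v \<Rightarrow> 'v) \<Rightarrow> bool" where
  "admissible_poisson scale mult \<longleftrightarrow>
     vector_space scale \<and> bilinear_prod scale mult \<and>
     (\<forall>x y z. scale 3 (assoc mult x y z) =
        mult (mult x z) y + mult (mult y z) x - mult (mult y x) z - mult (mult z x) y)"

text \<open>Powers: pw mult x 1 = x, pw mult x (i+1) = x * pw mult x i (pw mult x 0 is unused).\<close>
fun pw :: "('v \<Rightarrow> 'v \<Rightarrow> 'v) \<Rightarrow> 'v \<Rightarrow> nat \<Rightarrow> 'v::zero" where
  "pw mult x 0 = 0"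
| "pw mult x (Suc 0) = x"
| "pw mult x (Suc (Suc n)) = mult x (pw mult x (Suc n))"

definition nilalgebra :: "('v::zero \<Rightarrow> 'v \<Rightarrow> 'v) \<Rightarrow> bool" where
  "nilalgebra mult \<longleftrightarrow> (\<forall>x. \<exists>r\<ge>1. pw mult x r = 0)"

definition idempotent :: "('v \<Rightarrow> 'v \<Rightarrow> 'v) \<Rightarrow> 'v \<Rightarrow> bool" where
  "idempotent mult e \<longleftrightarrow> mult e e = e"

definition principal_idempotent :: "('v::zero \<Rightarrow> 'v \<Rightarrow> 'v) \<Rightarrow> 'v \<Rightarrow> bool" where
  "principal_idempotent mult e \<longleftrightarrow> e \<noteq> 0 \<and> idempotent mult e \<and>
     \<not> (\<exists>u. u \<noteq> 0 \<and> idempotent mult u \<and> mult u e = 0 \<and> mult e u = 0)"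

end

theory Submission imports Defs begin

locale apa = vector_space scale for scale :: "'k::field \<Rightarrow> 'v::ab_group_add \<Rightarrow> 'v" +
  fixes mult :: "'v \<Rightarrow> 'v \<Rightarrow> 'v"
  assumes bil: "bilinear_prod scale mult"
  and ident: "\<And>x y z. scale 3 (assoc mult x y z) =
        mult (mult x z) y + mult (mult y z) x - mult (mult y x) z - mult (mult z x) y"
  and c2: "(2::'k) \<noteq> 0" and c3: "(3::'k) \<noteq> 0"
begin

lemma lin_r: "module_hom scale scale (mult x)"
  using bil unfolding bilinear_prod_def by (simp add: module_hom_iff_linear)
lemma lin_l: "module_hom scale scale (\<lambda>y. mult y x)"
  using bil unfolding bilinear_prod_def by (simp add: module_hom_iff_linear)

lemma madd_r: "mult x (a + b) = mult x a + mult x b"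
  using module_hom.add[OF lin_r] .
lemma madd_l: "mult (a + b) x = mult a x + mult b x"
  using module_hom.add[OF lin_l] .
lemma mdiff_r: "mult x (a - b) = mult x a - mult x b"
  using module_hom.diff[OF lin_r] .
lemma mdiff_l: "mult (a - b) x = mult a x - mult b x"
  using module_hom.diff[OF lin_l] .
lemma mscale_r: "mult x (scale c a) = scale c (mult x a)"
  using module_hom.scale[OF lin_r] .
lemma mscale_l: "mult (scale c a) x = scale c (mult a x)"
  using module_hom.scale[OF lin_l] .
lemma mzero_r[simp]: "mult x 0 = 0"
  using module_hom.zero[OF lin_r] .
lemma mzero_l[simp]: "mult 0 x = 0"
  using module_hom.zero[OF lin_l] .

lemmas mlin = madd_r madd_l mdiff_r mdiff_l mscale_r mscale_l

lemma scale3: "scale 3 (v::'v) = v + v + v"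
proof -
  have "scale (1+1+1) v = v + v + v" by (simp only: scale_left_distrib scale_one)
  moreover have "(3::'k) = 1 + 1 + 1" by simp
  ultimately show ?thesis by (simp only:)
qed

lemma I3: "(mult (mult x y) z - mult x (mult y z)) + (mult (mult x y) z - mult x (mult y z))
   + (mult (mult x y) z - mult x (mult y z)) - 
   (mult (mult x z) y + mult (mult y z) x - mult (mult y x) z - mult (mult z x) y) = 0"
  using ident[of x y z] unfolding scale3 assoc_def by simp

lemma three_zero: "(v::'v) + v + v = 0 \<Longrightarrow> v = 0"
proof -
  assume h: "v + v + v = 0"
  have "scale (inverse 3) (scale 3 v) = 0" using h by (simp only: scale3 scale_zero_right)
  then show "v = 0" by (simp only: scale_scale left_inverse[OF c3] scale_one)
qed

lemma T1: "mult (mult x y + mult y x) z + mult z (mult x y + mult y x)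
   = mult x (mult y z + mult z y) + mult (mult y z + mult z y) x"
proof -
  let ?D = "mult (mult x y + mult y x) z + mult z (mult x y + mult y x)
   - (mult x (mult y z + mult z y) + mult (mult y z + mult z y) x)"
  have "?D + ?D + ?D = ((mult (mult x y) z - mult x (mult y z)) + (mult (mult x y) z - mult x (mult y z))
   + (mult (mult x y) z - mult x (mult y z)) - 
   (mult (mult x z) y + mult (mult y z) x - mult (mult y x) z - mult (mult z x) y)) + ((mult (mult x z) y - mult x (mult z y)) + (mult (mult x z) y - mult x (mult z y))
   + (mult (mult x z) y - mult x (mult z y)) - 
   (mult (mult x y) z + mult (mult z y) x - mult (mult z x) y - mult (mult y x) z)) - ((mult (mult z x) y - mult z (mult x y)) + (mult (mult z x) y - mult z (mult x y))
   + (mult (mult z x) y - mult z (mult x y)) - 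
   (mult (mult z y) x + mult (mult x y) z - mult (mult x z) y - mult (mult y z) x)) - ((mult (mult z y) x - mult z (mult y x)) + (mult (mult z y) x - mult z (mult y x))
   + (mult (mult z y) x - mult z (mult y x)) - 
   (mult (mult z x) y + mult (mult y x) z - mult (mult y z) x - mult (mult x z) y))"
    by (simp add: mlin algebra_simps)
  then have "?D + ?D + ?D = 0" by (simp only: I3) simp
  then have "?D = 0" by (rule three_zero)
  then show ?thesis by (simp only: right_minus_eq)
qed

lemma T2: "(mult x (mult y z + mult z y) - mult (mult y z + mult z y) x)
   = mult (mult x y - mult y x) z + mult z (mult x y - mult y x)
   + (mult y (mult x z - mult z x) + mult (mult x z - mult z x) y)"
proof -
  let ?D = "(mult x (mult y z + mult z y) - mult (mult y z + mult z y) x)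
   - (mult (mult x y - mult y x) z + mult z (mult x y - mult y x)
   + (mult y (mult x z - mult z x) + mult (mult x z - mult z x) y))"
  have "?D + ?D + ?D = - ((mult (mult x y) z - mult x (mult y z)) + (mult (mult x y) z - mult x (mult y z))
   + (mult (mult x y) z - mult x (mult y z)) - 
   (mult (mult x z) y + mult (mult y z) x - mult (mult y x) z - mult (mult z x) y)) - ((mult (mult x z) y - mult x (mult z y)) + (mult (mult x z) y - mult x (mult z y))
   + (mult (mult x z) y - mult x (mult z y)) - 
   (mult (mult x y) z + mult (mult z y) x - mult (mult z x) y - mult (mult y x) z)) + ((mult (mult y x) z - mult y (mult x z)) + (mult (mult y x) z - mult y (mult x z))
   + (mult (mult y x) z - mult y (mult x z)) - 
   (mult (mult y z) x + mult (mult x z) y - mult (mult x y) z - mult (mult z y) x)) - ((mult (mult y z) x - mult y (mult z x)) + (mult (mult y z) x - mult y (mult z x))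
   + (mult (mult y z) x - mult y (mult z x)) - 
   (mult (mult y x) z + mult (mult z x) y - mult (mult z y) x - mult (mult x y) z)) + ((mult (mult z x) y - mult z (mult x y)) + (mult (mult z x) y - mult z (mult x y))
   + (mult (mult z x) y - mult z (mult x y)) - 
   (mult (mult z y) x + mult (mult x y) z - mult (mult x z) y - mult (mult y z) x)) - ((mult (mult z y) x - mult z (mult y x)) + (mult (mult z y) x - mult z (mult y x))
   + (mult (mult z y) x - mult z (mult y x)) - 
   (mult (mult z x) y + mult (mult y x) z - mult (mult y z) x - mult (mult x z) y))"
    by (simp add: mlin algebra_simps)
  then have "?D + ?D + ?D = 0" by (simp only: I3) simp
  then have "?D = 0" by (rule three_zero)
  then show ?thesis by (simp only: right_minus_eq)
qed


definition cm :: "'v \<Rightarrow> 'v \<Rightarrow> 'v" where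
  "cm x y = scale (inverse 2) (mult x y + mult y x)"
definition br :: "'v \<Rightarrow> 'v \<Rightarrow> 'v" where
  "br x y = mult x y - mult y x"

lemma half_twice: "scale (inverse 2) (v + v) = v"
proof -
  have "v + v = scale 2 v" using scale_left_distrib[of 1 1 v] by simp
  then have "scale (inverse 2) (v + v) = scale (inverse 2 * 2) v" by (simp only: scale_scale)
  then show ?thesis using left_inverse[OF c2] by (simp only: scale_one)
qed

lemma cm_comm: "cm x y = cm y x"
  unfolding cm_def by (simp add: add.commute)
lemma cm_add_r: "cm x (a + b) = cm x a + cm x b"
  unfolding cm_def by (simp only: mlin scale_right_distrib[symmetric] add_ac)
lemma cm_add_l: "cm (a + b) x = cm a x + cm b x"
  unfolding cm_def by (simp only: mlin scale_right_distrib[symmetric] add_ac)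
lemma cm_scale_r: "cm x (scale c a) = scale c (cm x a)"
  unfolding cm_def by (simp only: mlin scale_right_distrib scale_scale mult.commute)
lemma cm_zero_r[simp]: "cm x 0 = 0"
  unfolding cm_def by simp
lemma cm_zero_l[simp]: "cm 0 x = 0"
  unfolding cm_def by simp
lemma cm_self: "cm x x = mult x x"
  unfolding cm_def by (rule half_twice)
lemma br_self: "br x x = 0"
  unfolding br_def by simp

lemma mult_split: "mult x y = cm x y + scale (inverse 2) (br x y)"
proof -
  have "cm x y + scale (inverse 2) (br x y) = scale (inverse 2) (mult x y + mult x y)"
  proof -
    have "cm x y + scale (inverse 2) (br x y) = scale (inverse 2) ((mult x y + mult y x) + (mult x y - mult y x))"
      unfolding cm_def br_def by (simp only: scale_right_distrib)
    also have "(mult x y + mult y x) + (mult x y - mult y x) = mult x y + mult x y" by simp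
    finally show ?thesis .
  qed
  then show ?thesis by (simp only: half_twice)
qed

lemma cm_assoc: "cm (cm x y) z = cm x (cm y z)"
proof -
  have "cm (cm x y) z = scale (inverse 2 * inverse 2)
      (mult (mult x y + mult y x) z + mult z (mult x y + mult y x))"
    unfolding cm_def by (simp only: mscale_l mscale_r scale_scale scale_right_distrib[symmetric])
  also have "\<dots> = scale (inverse 2 * inverse 2)
      (mult x (mult y z + mult z y) + mult (mult y z + mult z y) x)"
    by (simp only: T1)
  also have "\<dots> = cm x (cm y z)"
    unfolding cm_def by (simp only: mscale_l mscale_r scale_scale scale_right_distrib[symmetric])
  finally show ?thesis .
qed

lemma leibniz: "br x (cm y z) = cm (br x y) z + cm y (br x z)"
proof -
  have "br x (cm y z) = scale (inverse 2)
      (mult x (mult y z + mult z y) - mult (mult y z + mult z y) x)"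
    unfolding cm_def br_def by (simp only: mscale_l mscale_r scale_right_diff_distrib[symmetric])
  also have "\<dots> = scale (inverse 2) (mult (mult x y - mult y x) z + mult z (mult x y - mult y x)
   + (mult y (mult x z - mult z x) + mult (mult x z - mult z x) y))"
    by (simp only: T2)
  also have "\<dots> = cm (br x y) z + cm y (br x z)"
    unfolding cm_def br_def by (simp only: scale_right_distrib[symmetric])
  finally show ?thesis .
qed

lemma pw_br: "br x (pw mult x (Suc n)) = 0 \<and> pw mult x (Suc (Suc n)) = cm x (pw mult x (Suc n))"
proof (induction n)
  case 0
  then show ?case using br_self mult_split[of x x] by simp
next
  case (Suc n)
  have e: "pw mult x (Suc (Suc n)) = cm x (pw mult x (Suc n))" using Suc by simp
  have b: "br x (pw mult x (Suc (Suc n))) = 0"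
    unfolding e leibniz using Suc br_self by simp
  then show ?case using mult_split[of x "pw mult x (Suc (Suc n))"] by simp
qed

abbreviation P where "P x n \<equiv> pw mult x (Suc n)"

lemma P_Suc: "P x (Suc n) = cm x (P x n)"
  using pw_br by blast

lemma P_add: "cm (P x a) (P x b) = P x (a + b + 1)"
proof (induction a)
  case 0
  then show ?case using P_Suc[of x b] by simp
next
  case (Suc a)
  have "cm (P x (Suc a)) (P x b) = cm x (cm (P x a) (P x b))"
    by (simp only: P_Suc cm_assoc)
  also have "\<dots> = P x (Suc a + b + 1)"
  proof -
    have "Suc a + b + 1 = Suc (a + b + 1)" by simp
    then show ?thesis by (simp only: Suc.IH P_Suc)
  qed
  finally show ?case .
qed

lemma subspace_range: "subspace (range (cm a))"
  unfolding subspace_def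
proof (intro conjI ballI allI)
  have "0 = cm a 0" by simp
  then show "0 \<in> range (cm a)" by (rule range_eqI)
next
  fix u v assume "u \<in> range (cm a)" "v \<in> range (cm a)"
  then obtain y1 y2 where "u = cm a y1" "v = cm a y2" by blast
  then have "u + v = cm a (y1 + y2)" by (simp only: cm_add_r)
  then show "u + v \<in> range (cm a)" by (rule range_eqI)
next
  fix c u assume "u \<in> range (cm a)"
  then obtain y where "u = cm a y" by blast
  then have "scale c u = cm a (scale c y)" by (simp only: cm_scale_r)
  then show "scale c u \<in> range (cm a)" by (rule range_eqI)
qed

end

locale apa_fd = apa +
  fixes Bs assumes fB: "finite Bs" and sB: "span Bs = UNIV"
begin

lemma fdv: "\<exists>B. finite_dimensional_vector_space scale B"
proof -
  obtain B where B: "B \<subseteq> UNIV" "independent B" "UNIV \<subseteq> span B" "card B = dim UNIV"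
    by (rule basis_exists)
  have sBs: "B \<subseteq> span Bs" unfolding sB by (rule subset_UNIV)
  have fin: "finite B" using independent_span_bound[OF fB B(2) sBs] by (rule conjunct1)
  have spB: "span B = UNIV" using B(3) by (rule subset_antisym[OF subset_UNIV])
  have "finite_dimensional_vector_space scale B"
    by (rule finite_dimensional_vector_space.intro[OF vector_space_axioms
        finite_dimensional_vector_space_axioms.intro[OF fin B(2) spB]])
  then show ?thesis by (rule exI)
qed

lemma exists_idem:
  assumes nz: "\<And>n. P x n \<noteq> 0"
  shows "\<exists>e. e \<noteq> 0 \<and> cm e e = e"
proof -
  obtain B where "finite_dimensional_vector_space scale B" using fdv by blast
  then interpret fd: finite_dimensional_vector_space scale B .
  define W where "W n = range (cm (P x n))" for n
  have Wsub: "W (n + k + 1) \<subseteq> W n" for n k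
  proof
    fix v assume "v \<in> W (n + k + 1)"
    then obtain y where "v = cm (P x (n + k + 1)) y" unfolding W_def by blast
    then have "v = cm (cm (P x n) (P x k)) y" by (simp only: P_add)
    then have "v = cm (P x n) (cm (P x k) y)" by (simp only: cm_assoc)
    then show "v \<in> W n" unfolding W_def by blast
  qed
  obtain n where n: "\<forall>m. dim (W n) \<le> dim (W m)"
    using ex_has_least_nat[of "\<lambda>_. True" 0 "\<lambda>n. dim (W n)"] by blast
  have sub: "W (n + (n + 2) + 1) \<subseteq> W n" by (rule Wsub)
  have dle: "dim (W n) \<le> dim (W (n + (n + 2) + 1))" using n by blast
  have sW: "subspace (W m)" for m unfolding W_def by (rule subspace_range)
  have eq: "W (n + (n + 2) + 1) = W n"
    by (rule fd.subspace_dim_equal[OF sW sW sub dle])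
  have "cm (P x n) (P x 0) = P x (n + 1)" using P_add[of x n 0] by (simp only: add_0_right)
  then have "P x (n + 1) \<in> W n" unfolding W_def by (rule range_eqI[OF sym])
  then have "P x (n + 1) \<in> W (n + (n + 2) + 1)" by (simp only: eq)
  moreover have ix: "n + (n + 2) + 1 = n + 1 + (n + 1) + 1" by simp
  ultimately have "P x (n + 1) \<in> range (cm (P x (n + 1 + (n + 1) + 1)))"
    unfolding W_def by (simp only:)
  then obtain y where y: "P x (n + 1) = cm (P x (n + 1 + (n + 1) + 1)) y" by blast
  have sq: "cm (P x (n + 1)) (P x (n + 1)) = P x (n + 1 + (n + 1) + 1)"
    by (rule P_add)
  define e where "e = cm (P x (n + 1)) y"
  have "cm e e = cm (P x (n + 1)) (cm y (cm (P x (n + 1)) y))"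
    unfolding e_def by (rule cm_assoc)
  also have "\<dots> = cm (P x (n + 1)) (cm (cm y (P x (n + 1))) y)"
    by (simp only: cm_assoc)
  also have "\<dots> = cm (P x (n + 1)) (cm (cm (P x (n + 1)) y) y)"
    by (simp only: cm_comm[of y])
  also have "\<dots> = cm (cm (P x (n + 1)) (cm (P x (n + 1)) y)) y"
    by (simp only: cm_assoc)
  also have "\<dots> = cm (cm (cm (P x (n + 1)) (P x (n + 1))) y) y"
    by (simp only: cm_assoc)
  also have "\<dots> = e" unfolding sq y[symmetric] e_def ..
  finally have ee: "cm e e = e" .
  have "cm (P x (n + 1)) e = P x (n + 1)"
    unfolding e_def by (simp only: cm_assoc[symmetric] sq y[symmetric])
  then have "e \<noteq> 0"
  proof (intro notI)
    assume h: "cm (P x (n + 1)) e = P x (n + 1)" and e0: "e = 0"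
    have "cm (P x (n + 1)) e = 0" unfolding e0 by (rule cm_zero_r)
    then have "P x (n + 1) = 0" using h by (simp only:)
    then show False using nz[of "n+1"] by blast
  qed
  then show ?thesis using ee by blast
qed

lemma principal:
  assumes "\<exists>e. e \<noteq> 0 \<and> cm e e = e"
  shows "\<exists>e. principal_idempotent mult e"
proof -
  obtain B where "finite_dimensional_vector_space scale B" using fdv by blast
  then interpret fd: finite_dimensional_vector_space scale B .
  let ?Q = "\<lambda>e. e \<noteq> 0 \<and> cm e e = e"
  obtain e0 where e0: "?Q e0" using assms by blast
  have bd: "\<forall>f. ?Q f \<longrightarrow> dim (range (cm f)) < fd.dimension + 1"
    using fd.dim_subset_UNIV by (simp add: less_Suc_eq_le)
  obtain e where e: "?Q e" and emax: "\<forall>f. ?Q f \<longrightarrow> dim (range (cm f)) \<le> dim (range (cm e))"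
    using Lattices_Big.ex_has_greatest_nat[of ?Q e0 "\<lambda>f. dim (range (cm f))" "fd.dimension + 1", OF e0 bd]
    by blast
  have "\<not> (\<exists>u. u \<noteq> 0 \<and> idempotent mult u \<and> mult u e = 0 \<and> mult e u = 0)"
  proof
    assume "\<exists>u. u \<noteq> 0 \<and> idempotent mult u \<and> mult u e = 0 \<and> mult e u = 0"
    then obtain u where u: "u \<noteq> 0" "mult u u = u" "mult u e = 0" "mult e u = 0"
      unfolding idempotent_def by blast
    have uu: "cm u u = u" using u cm_self by simp
    have ue: "cm u e = 0" "cm e u = 0" using u unfolding cm_def by simp_all
    define f where "f = e + u"
    have ff: "cm f f = f" unfolding f_def using e uu ue by (simp add: cm_add_l cm_add_r)
    have fu: "cm f u = u" unfolding f_def using uu ue by (simp add: cm_add_l)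
    have fe: "cm f e = e" unfolding f_def using e ue by (simp add: cm_add_l)
    have "f \<noteq> 0" using fu u by auto
    then have le: "dim (range (cm f)) \<le> dim (range (cm e))" using emax ff by blast
    have sub: "range (cm e) \<subseteq> range (cm f)"
    proof
      fix v assume "v \<in> range (cm e)"
      then obtain y where "v = cm e y" by blast
      then have "v = cm f (cm e y)" using fe by (simp add: cm_assoc[symmetric])
      then show "v \<in> range (cm f)" by blast
    qed
    have "range (cm e) = range (cm f)"
      by (rule fd.subspace_dim_equal) (use sub le subspace_range in auto)
    moreover have "u \<in> range (cm f)" using fu by (metis rangeI)
    ultimately obtain y where "u = cm e y" by blast
    then have "cm e u = u" using e by (simp add: cm_assoc[symmetric])
    then show False using ue u by simp
  qed
  moreover have "idempotent mult e" using e cm_self unfolding idempotent_def by simp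
  ultimately show ?thesis using e unfolding principal_idempotent_def by blast
qed

end

theorem mainTheorem9:
  fixes scale :: "'k::field \<Rightarrow> 'v::ab_group_add \<Rightarrow> 'v"
    and mult :: "'v \<Rightarrow> 'v \<Rightarrow> 'v"
  assumes char2: "(2::'k) \<noteq> 0" and char3: "(3::'k) \<noteq> 0"
    and adm: "admissible_poisson scale mult"
    and fd: "fin_dim scale"
    and notnil: "\<not> nilalgebra mult"
  shows "\<exists>e. principal_idempotent mult e"
proof -
  have vs: "vector_space scale" and bl: "bilinear_prod scale mult"
    and idt: "\<forall>x y z. scale 3 (assoc mult x y z) =
        mult (mult x z) y + mult (mult y z) x - mult (mult y x) z - mult (mult z x) y"
    using adm unfolding admissible_poisson_def by auto
  obtain Bs where fB: "finite Bs" and sB: "module.span scale Bs = UNIV"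
    using fd unfolding fin_dim_def by blast
  have "apa_fd scale mult Bs"
    unfolding apa_fd_def apa_fd_axioms_def apa_def apa_axioms_def
    using vs bl idt char2 char3 fB sB by blast
  then interpret A: apa_fd scale mult Bs .
  obtain x where x: "\<forall>r\<ge>1. pw mult x r \<noteq> 0"
    using notnil unfolding nilalgebra_def by blast
  have "\<And>n. pw mult x (Suc n) \<noteq> 0" using x by simp
  then show ?thesis by (rule A.principal[OF A.exists_idem])
qed

end
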